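(* Let $n=2$, $f\in\mathcal{E}$, and let $\widetilde f$ be a harmonic extension of $f$. Then $$\|\widetilde\nabla^{1,1}\widetilde f\|^2:=\widetilde g^{I\bar L}\widetilde g^{K\bar J}\,(\partial_{\zeta_I}\partial_{\bar\zeta_J}\widetilde f)\,(\partial_{\zeta_K}\partial_{\bar\zeta_L}\widetilde f)$$ vanishes identically on $\mathcal{N}$.
   Context: For $n=2$: on $\mathbb{C}^{3}$ with coordinates $\zeta=(\zeta_0,\zeta_1,\zeta_2)$ put $L(\zeta)=|\zeta_0|^2-|\zeta_1|^2-|\zeta_2|^2$, $\mathcal{N}=\{\zeta\ne0:L=0\}$, $\Delta=\partial_{\zeta_0}\partial_{\bar\zeta_0}-\partial_{\zeta_1}\partial_{\bar\zeta_1}-\partial_{\zeta_2}\partial_{\bar\zeta_2}$, $\widetilde g^{K\bar L}=\mathrm{diag}(1,-1,-1)$ (summation over repeated indices). $\mathcal{E}=\{f\in C^\infty(\mathcal{N},\mathbb{R}):f(\lambda\zeta)=f(\zeta)\ \forall\lambda\in\mathbb{C}^*\}$. A harmonic extension of $f\in\mathcal{E}$ is a smooth $\widetilde f$ on $\mathbb{C}^{3}\setminus\{0\}$ with $\widetilde f(\lambda\zeta)=\widetilde f(\zeta)$, $\widetilde f|_{\mathcal{N}}=f$, and $\Delta\widetilde f=L\,h$ for some smooth $h$. *)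

theory Defs
  imports "HOL-Analysis.Analysis"
begin

text \<open>Points of C^3 with coordinates zeta_0, zeta_1, zeta_2 (indices 0,1,2 of the type 3).\<close>
type_synonym C3 = "complex ^ 3"

definition Lform :: "C3 \<Rightarrow> real" where
  "Lform z = (cmod (z $ 0))^2 - (cmod (z $ 1))^2 - (cmod (z $ 2))^2"

definition nullcone :: "C3 set" where
  "nullcone = {z. z \<noteq> 0 \<and> Lform z = 0}"

fun iter_dd :: "'a::real_normed_vector list \<Rightarrow> ('a \<Rightarrow> 'b::real_normed_vector) \<Rightarrow> 'a \<Rightarrow> 'b" where
  "iter_dd [] f = f"
| "iter_dd (v # vs) f = (\<lambda>x. frechet_derivative (iter_dd vs f) (at x) v)"

definition smooth_on :: "'a::real_normed_vector set \<Rightarrow> ('a \<Rightarrow> 'b::real_normed_vector) \<Rightarrow> bool" where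
  "smooth_on S f \<longleftrightarrow> open S \<and> (\<forall>vs. iter_dd vs f differentiable_on S)"

definition wirt :: "3 \<Rightarrow> (C3 \<Rightarrow> complex) \<Rightarrow> C3 \<Rightarrow> complex" where
  "wirt j g z = (frechet_derivative g (at z) (axis j 1)
                 - \<i> * frechet_derivative g (at z) (axis j \<i>)) / 2"

definition wirt_bar :: "3 \<Rightarrow> (C3 \<Rightarrow> complex) \<Rightarrow> C3 \<Rightarrow> complex" where
  "wirt_bar j g z = (frechet_derivative g (at z) (axis j 1)
                 + \<i> * frechet_derivative g (at z) (axis j \<i>)) / 2"

definition sgnL :: "3 \<Rightarrow> real" where
  "sgnL k = (if k = 0 then 1 else -1)"

definition ginv :: "3 \<Rightarrow> 3 \<Rightarrow> real" where
  "ginv k l = (if k = l then sgnL k else 0)"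

definition Delta :: "(C3 \<Rightarrow> real) \<Rightarrow> C3 \<Rightarrow> complex" where
  "Delta F z = (\<Sum>k\<in>UNIV. of_real (sgnL k) * wirt k (wirt_bar k (\<lambda>w. of_real (F w))) z)"

definition Espace :: "(C3 \<Rightarrow> real) set" where
  "Espace = {f. (\<exists>U g. open U \<and> nullcone \<subseteq> U \<and> smooth_on U (g :: C3 \<Rightarrow> real)
                     \<and> (\<forall>z\<in>nullcone. g z = f z))
              \<and> (\<forall>z\<in>nullcone. \<forall>c::complex. c \<noteq> 0 \<longrightarrow> f (c *s z) = f z)}"

definition harmonic_extension :: "(C3 \<Rightarrow> real) \<Rightarrow> (C3 \<Rightarrow> real) \<Rightarrow> bool" where
  "harmonic_extension f F \<longleftrightarrow>
     smooth_on (UNIV - {0}) F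
   \<and> (\<forall>z. z \<noteq> 0 \<longrightarrow> (\<forall>c::complex. c \<noteq> 0 \<longrightarrow> F (c *s z) = F z))
   \<and> (\<forall>z\<in>nullcone. F z = f z)
   \<and> (\<exists>h :: C3 \<Rightarrow> real. smooth_on (UNIV - {0}) h
        \<and> (\<forall>z. z \<noteq> 0 \<longrightarrow> Delta F z = of_real (Lform z * h z)))"

definition cHess :: "(C3 \<Rightarrow> real) \<Rightarrow> 3 \<Rightarrow> 3 \<Rightarrow> C3 \<Rightarrow> complex" where
  "cHess F i j z = wirt i (wirt_bar j (\<lambda>w. of_real (F w))) z"

definition hess11_normsq :: "(C3 \<Rightarrow> real) \<Rightarrow> C3 \<Rightarrow> complex" where
  "hess11_normsq F z = (\<Sum>i\<in>UNIV. \<Sum>l\<in>UNIV. \<Sum>k\<in>UNIV. \<Sum>j\<in>UNIV.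
       of_real (ginv i l * ginv k j) * cHess F i j z * cHess F k l z)"

end

theory Submission
  imports Defs
begin


lemma lin_smul_left: "bounded_linear (\<lambda>y::C3. \<delta> *s y)"
proof -
  have "linear (\<lambda>y::C3. \<delta> *s y)"
    by (rule linearI) (auto simp: vec_eq_iff algebra_simps complex_eq_iff)
  then show ?thesis using linear_conv_bounded_linear by blast
qed

lemma lin_smul_right: "bounded_linear (\<lambda>c::complex. c *s (z::C3))"
proof -
  have "linear (\<lambda>c::complex. c *s (z::C3))"
    by (rule linearI) (auto simp: vec_eq_iff algebra_simps complex_eq_iff)
  then show ?thesis using linear_conv_bounded_linear by blast
qed

lemma smul_split: "(c::complex) *s (u::C3) = Re c *\<^sub>R u + Im c *\<^sub>R (\<i> *s u)"
  by (auto simp: vec_eq_iff algebra_simps complex_eq_iff)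

definition DF :: "(C3 \<Rightarrow> real) \<Rightarrow> C3 \<Rightarrow> C3 \<Rightarrow> real" where
  "DF F y u = frechet_derivative F (at y) u"
definition PP :: "(C3 \<Rightarrow> real) \<Rightarrow> C3 \<Rightarrow> C3 \<Rightarrow> C3 \<Rightarrow> real" where
  "PP F y a u = frechet_derivative (\<lambda>x. DF F x u) (at y) a"

lemma smooth_facts:
  assumes "smooth_on (UNIV - {0}) F" "y \<noteq> 0"
  shows "(F has_derivative DF F y) (at y)"
    and "((\<lambda>x. DF F x u) has_derivative (\<lambda>a. PP F y a u)) (at y)"
proof -
  have op: "open (UNIV - {0::C3})" by auto
  have "iter_dd [] F differentiable_on (UNIV - {0})" using assms(1) unfolding smooth_on_def by blast
  then have "F differentiable at y" using assms(2) op differentiable_on_eq_differentiable_at by auto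
  then show "(F has_derivative DF F y) (at y)" 
    unfolding DF_def[abs_def] using frechet_derivative_works by (metis (no_types) eta_contract_eq)
  have "iter_dd [u] F differentiable_on (UNIV - {0})" using assms(1) unfolding smooth_on_def by blast
  then have "(\<lambda>x. DF F x u) differentiable at y" using assms(2) op differentiable_on_eq_differentiable_at
    by (auto simp: DF_def)
  then show "((\<lambda>x. DF F x u) has_derivative (\<lambda>a. PP F y a u)) (at y)"
    unfolding PP_def using frechet_derivative_works by (metis (no_types) eta_contract_eq)
qed


lemma first_order:
  assumes sm: "smooth_on (UNIV - {0}) F"
    and hom: "\<forall>z. z \<noteq> 0 \<longrightarrow> (\<forall>c::complex. c \<noteq> 0 \<longrightarrow> F (c *s z) = F z)"
    and y: "y \<noteq> 0"
  shows "DF F y (\<delta> *s y) = 0"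
proof -
  have d1: "((\<lambda>c::complex. c *s y) has_derivative (\<lambda>\<delta>. \<delta> *s y)) (at 1)"
    using bounded_linear_imp_has_derivative[OF lin_smul_right] .
  have d2: "(F has_derivative DF F y) (at ((1::complex) *s y))"
    using smooth_facts(1)[OF sm y] by simp
  have d: "((\<lambda>c. F (c *s y)) has_derivative (\<lambda>\<delta>. DF F y (\<delta> *s y))) (at 1)"
    using has_derivative_compose[OF d1 d2] .
  have d0: "((\<lambda>c::complex. F (c *s y)) has_derivative (\<lambda>_. 0)) (at 1)"
    by (rule has_derivative_transform_within_open[of "\<lambda>_. F y" _ _ _ "UNIV - {0}"])
      (use hom y in auto)
  have "(\<lambda>\<delta>. DF F y (\<delta> *s y)) = (\<lambda>_. 0)"
    using has_derivative_unique[OF d d0] .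
  then show ?thesis by metis
qed

lemma smul_scale_invariance:
  assumes sm: "smooth_on (UNIV - {0}) F"
    and hom: "\<forall>z. z \<noteq> 0 \<longrightarrow> (\<forall>c::complex. c \<noteq> 0 \<longrightarrow> F (c *s z) = F z)"
    and y: "y \<noteq> 0" and c: "c \<noteq> 0"
  shows "DF F (c *s y) (c *s u) = DF F y u"
proof -
  have cy: "c *s y \<noteq> 0" using c y by (auto simp: vec_eq_iff)
  have d: "((\<lambda>x. F (c *s x)) has_derivative (\<lambda>u. DF F (c *s y) (c *s u))) (at y)"
    using has_derivative_compose[OF bounded_linear_imp_has_derivative[OF lin_smul_left]
       smooth_facts(1)[OF sm cy]] .
  have d0: "((\<lambda>x. F (c *s x)) has_derivative DF F y) (at y)"
    by (rule has_derivative_transform_within_open[OF smooth_facts(1)[OF sm y], of "UNIV - {0}"])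
      (use hom c y in auto)
  have "(\<lambda>u. DF F (c *s y) (c *s u)) = DF F y"
    using has_derivative_unique[OF d d0] .
  then show ?thesis by metis
qed


lemma second_first_slot:
  assumes sm: "smooth_on (UNIV - {0}) F"
    and hom: "\<forall>z. z \<noteq> 0 \<longrightarrow> (\<forall>c::complex. c \<noteq> 0 \<longrightarrow> F (c *s z) = F z)"
    and z: "z \<noteq> 0"
  shows "PP F z (\<delta> *s z) u + Re \<delta> * DF F z u + Im \<delta> * DF F z (\<i> *s u) = 0"
proof -
  have lin: "linear (DF F y)" if "y \<noteq> 0" for y
    using has_derivative_linear[OF smooth_facts(1)[OF sm that]] .
  have eq: "Re c * DF F (c *s z) u + Im c * DF F (c *s z) (\<i> *s u) = DF F z u" if c: "c \<noteq> 0" for c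
  proof -
    have cz: "c *s z \<noteq> 0" using c z by (auto simp: vec_eq_iff)
    have "Re c * DF F (c *s z) u + Im c * DF F (c *s z) (\<i> *s u) = DF F (c *s z) (c *s u)"
      using lin[OF cz] by (subst smul_split[of c u]) (simp add: linear_add linear_scale)
    also have "\<dots> = DF F z u" using smul_scale_invariance[OF sm hom z c] .
    finally show ?thesis .
  qed
  have d1: "((\<lambda>c::complex. c *s z) has_derivative (\<lambda>\<delta>. \<delta> *s z)) (at 1)"
    using bounded_linear_imp_has_derivative[OF lin_smul_right] .
  have dg: "((\<lambda>c::complex. DF F (c *s z) v) has_derivative (\<lambda>\<delta>. PP F z (\<delta> *s z) v)) (at 1)" for v
    using has_derivative_compose[OF d1, of "\<lambda>x. DF F x v"] smooth_facts(2)[OF sm z, of v] by simp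
  have dRe: "(Re has_derivative Re) (at (1::complex))"
    using bounded_linear_imp_has_derivative[OF bounded_linear_Re] .
  have dIm: "(Im has_derivative Im) (at (1::complex))"
    using bounded_linear_imp_has_derivative[OF bounded_linear_Im] .
  have d: "((\<lambda>c. Re c * DF F (c *s z) u + Im c * DF F (c *s z) (\<i> *s u)) has_derivative
     (\<lambda>\<delta>. Re 1 * PP F z (\<delta> *s z) u + Re \<delta> * DF F (1 *s z) u
          + (Im 1 * PP F z (\<delta> *s z) (\<i> *s u) + Im \<delta> * DF F (1 *s z) (\<i> *s u)))) (at 1)"
    by (rule has_derivative_add; rule has_derivative_mult; (rule dRe | rule dIm | rule dg))
  have d0: "((\<lambda>c. Re c * DF F (c *s z) u + Im c * DF F (c *s z) (\<i> *s u)) has_derivative (\<lambda>_. 0)) (at 1)"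
    by (rule has_derivative_transform_within_open[of "\<lambda>_. DF F z u" _ _ _ "UNIV - {0}"])
      (use eq in force)+
  have "(\<lambda>\<delta>. Re 1 * PP F z (\<delta> *s z) u + Re \<delta> * DF F (1 *s z) u
          + (Im 1 * PP F z (\<delta> *s z) (\<i> *s u) + Im \<delta> * DF F (1 *s z) (\<i> *s u))) = (\<lambda>_. 0)"
    using has_derivative_unique[OF d d0] .
  then have "Re 1 * PP F z (\<delta> *s z) u + Re \<delta> * DF F (1 *s z) u
          + (Im 1 * PP F z (\<delta> *s z) (\<i> *s u) + Im \<delta> * DF F (1 *s z) (\<i> *s u)) = 0" by metis
  then show ?thesis by simp
qed


lemma DF_rep:
  assumes sm: "smooth_on (UNIV - {0}) F" and y: "y \<noteq> 0"
  shows "DF F y u = (\<Sum>b\<in>Basis. (u \<bullet> b) * DF F y b)"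
proof -
  have lin: "linear (DF F y)" using has_derivative_linear[OF smooth_facts(1)[OF sm y]] .
  have "DF F y u = DF F y (\<Sum>b\<in>Basis. (u \<bullet> b) *\<^sub>R b)" by (simp add: euclidean_representation)
  also have "\<dots> = (\<Sum>b\<in>Basis. (u \<bullet> b) * DF F y b)" using lin by (simp add: linear_sum linear_scale)
  finally show ?thesis .
qed

lemma PP_rep:
  assumes sm: "smooth_on (UNIV - {0}) F" and y: "y \<noteq> 0"
  shows "PP F y a u = (\<Sum>b\<in>Basis. (u \<bullet> b) * PP F y a b)"
proof -
  have d: "((\<lambda>x. \<Sum>b\<in>Basis. (u \<bullet> b) * DF F x b) has_derivative
       (\<lambda>a. \<Sum>b\<in>Basis. (u \<bullet> b) * PP F y a b)) (at y)"
    by (rule has_derivative_sum, rule has_derivative_mult_right, rule smooth_facts(2)[OF sm y])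
  have d2: "((\<lambda>x. DF F x u) has_derivative (\<lambda>a. \<Sum>b\<in>Basis. (u \<bullet> b) * PP F y a b)) (at y)"
    by (rule has_derivative_transform_within_open[OF d, of "UNIV - {0}"])
      (use y DF_rep[OF sm] in auto)
  have "(\<lambda>a. \<Sum>b\<in>Basis. (u \<bullet> b) * PP F y a b) = (\<lambda>a. PP F y a u)"
    using has_derivative_unique[OF d2 smooth_facts(2)[OF sm y]] .
  then show ?thesis by metis
qed

lemma second_second_slot:
  assumes sm: "smooth_on (UNIV - {0}) F"
    and hom: "\<forall>z. z \<noteq> 0 \<longrightarrow> (\<forall>c::complex. c \<noteq> 0 \<longrightarrow> F (c *s z) = F z)"
    and z: "z \<noteq> 0"
  shows "PP F z a (\<delta> *s z) + DF F z (\<delta> *s a) = 0"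
proof -
  have dl: "((\<lambda>y. (\<delta> *s y) \<bullet> b) has_derivative (\<lambda>a. (\<delta> *s a) \<bullet> b)) (at z)" for b
    by (rule has_derivative_inner_left, rule bounded_linear_imp_has_derivative[OF lin_smul_left])
  have d: "((\<lambda>y. \<Sum>b\<in>Basis. ((\<delta> *s y) \<bullet> b) * DF F y b) has_derivative
     (\<lambda>a. \<Sum>b\<in>Basis. ((\<delta> *s z) \<bullet> b) * PP F z a b + ((\<delta> *s a) \<bullet> b) * DF F z b)) (at z)"
    by (rule has_derivative_sum, rule has_derivative_mult, rule dl, rule smooth_facts(2)[OF sm z])
  have d0: "((\<lambda>y. \<Sum>b\<in>Basis. ((\<delta> *s y) \<bullet> b) * DF F y b) has_derivative (\<lambda>_. 0)) (at z)"
  proof (rule has_derivative_transform_within_open[of "\<lambda>_. 0" _ _ _ "UNIV - {0}"])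
    fix y assume "y \<in> UNIV - {0::C3}"
    then have y: "y \<noteq> 0" by auto
    show "0 = (\<Sum>b\<in>Basis. ((\<delta> *s y) \<bullet> b) * DF F y b)"
      using DF_rep[OF sm y, of "\<delta> *s y"] first_order[OF sm hom y, of \<delta>] by simp
  qed (use z in auto)
  have "(\<lambda>a. \<Sum>b\<in>Basis. ((\<delta> *s z) \<bullet> b) * PP F z a b + ((\<delta> *s a) \<bullet> b) * DF F z b) = (\<lambda>_. 0)"
    using has_derivative_unique[OF d d0] .
  then have "(\<Sum>b\<in>Basis. ((\<delta> *s z) \<bullet> b) * PP F z a b + ((\<delta> *s a) \<bullet> b) * DF F z b) = 0" by metis
  then show ?thesis
    using PP_rep[OF sm z, of a "\<delta> *s z"] DF_rep[OF sm z, of "\<delta> *s a"] by (simp add: sum.distrib)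
qed


lemma ofreal_deriv:
  assumes "(g has_derivative g') (at y)"
  shows "((\<lambda>w. complex_of_real (g w)) has_derivative (\<lambda>u. complex_of_real (g' u))) (at y)"
  using bounded_linear.has_derivative[OF bounded_linear_of_real assms] .

lemma wirt_bar_eq:
  assumes sm: "smooth_on (UNIV - {0}) F" and y: "y \<noteq> 0"
  shows "wirt_bar j (\<lambda>w. of_real (F w)) y
     = (of_real (DF F y (axis j 1)) + \<i> * of_real (DF F y (axis j \<i>))) / 2"
proof -
  have "frechet_derivative (\<lambda>w. complex_of_real (F w)) (at y) = (\<lambda>u. of_real (DF F y u))"
    using frechet_derivative_at[OF ofreal_deriv[OF smooth_facts(1)[OF sm y]]] by simp
  then show ?thesis unfolding wirt_bar_def by simp
qed

lemma cHess_eq: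
  assumes sm: "smooth_on (UNIV - {0}) F" and z: "z \<noteq> 0"
  shows "cHess F i j z = ((of_real (PP F z (axis i 1) (axis j 1)) + \<i> * of_real (PP F z (axis i 1) (axis j \<i>)))
     - \<i> * (of_real (PP F z (axis i \<i>) (axis j 1)) + \<i> * of_real (PP F z (axis i \<i>) (axis j \<i>)))) / 4"
proof -
  let ?B = "\<lambda>y. (complex_of_real (DF F y (axis j 1)) + \<i> * of_real (DF F y (axis j \<i>))) * (1/2)"
  let ?B' = "\<lambda>a. (complex_of_real (PP F z a (axis j 1)) + \<i> * of_real (PP F z a (axis j \<i>))) * (1/2)"
  have d: "(?B has_derivative ?B') (at z)"
    by (rule has_derivative_mult_left, rule has_derivative_add, rule ofreal_deriv,
        rule smooth_facts(2)[OF sm z], rule has_derivative_mult_right, rule ofreal_deriv,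
        rule smooth_facts(2)[OF sm z])
  have d2: "(wirt_bar j (\<lambda>w. of_real (F w)) has_derivative ?B') (at z)"
    by (rule has_derivative_transform_within_open[OF d, of "UNIV - {0}"])
      (use z wirt_bar_eq[OF sm] in auto)
  have "frechet_derivative (wirt_bar j (\<lambda>w. of_real (F w))) (at z) = ?B'"
    using frechet_derivative_at[OF d2] by simp
  then show ?thesis unfolding cHess_def wirt_def by (simp add: field_simps)
qed


lemma expand_z: "(z::C3) = (\<Sum>i\<in>UNIV. Re (z$i) *\<^sub>R axis i 1 + Im (z$i) *\<^sub>R axis i \<i>)"
  by (auto simp: vec_eq_iff forall_3 sum_3 axis_def complex_eq_iff)

lemma expand_iz: "\<i> *s (z::C3) = (\<Sum>i\<in>UNIV. Re (z$i) *\<^sub>R axis i \<i> - Im (z$i) *\<^sub>R axis i 1)"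
  by (auto simp: vec_eq_iff forall_3 sum_3 axis_def complex_eq_iff)

lemma lin_expand:
  fixes z :: C3 and ll :: "C3 \<Rightarrow> real"
  assumes "linear ll"
  shows "ll z = (\<Sum>i\<in>UNIV. Re (z$i) * ll (axis i 1) + Im (z$i) * ll (axis i \<i>))"
    and "ll (\<i> *s z) = (\<Sum>i\<in>UNIV. Re (z$i) * ll (axis i \<i>) - Im (z$i) * ll (axis i 1))"
proof -
  show "ll z = (\<Sum>i\<in>UNIV. Re (z$i) * ll (axis i 1) + Im (z$i) * ll (axis i \<i>))"
    using arg_cong[OF expand_z[of z], of ll] by (simp add: assms linear_sum linear_add linear_scale)
  show "ll (\<i> *s z) = (\<Sum>i\<in>UNIV. Re (z$i) * ll (axis i \<i>) - Im (z$i) * ll (axis i 1))"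
    using arg_cong[OF expand_iz[of z], of ll] by (simp add: assms linear_sum linear_diff linear_scale)
qed

lemma L1:
  fixes z :: C3 and ll :: "C3 \<Rightarrow> real"
  assumes "linear ll"
  shows "(\<Sum>i\<in>UNIV. z$i * (of_real (ll (axis i 1)) - \<i> * of_real (ll (axis i \<i>))))
     = of_real (ll z) - \<i> * of_real (ll (\<i> *s z))"
  using lin_expand[OF assms, of z]
  by (simp add: sum_3 complex_eq_iff algebra_simps)

lemma L2:
  fixes z :: C3 and ll :: "C3 \<Rightarrow> real"
  assumes "linear ll"
  shows "(\<Sum>i\<in>UNIV. cnj (z$i) * (of_real (ll (axis i 1)) + \<i> * of_real (ll (axis i \<i>))))
     = of_real (ll z) + \<i> * of_real (ll (\<i> *s z))"
  using lin_expand[OF assms, of z]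
  by (simp add: sum_3 complex_eq_iff algebra_simps)



lemma sumA: "(\<Sum>i\<in>(UNIV::3 set). (f i + \<i> * g i) / 4) = ((\<Sum>i\<in>UNIV. f i) + \<i> * (\<Sum>i\<in>UNIV. g i)) / 4"
  by (simp add: sum_3 field_simps)
lemma sumB: "(\<Sum>i\<in>(UNIV::3 set). (f i - \<i> * g i) / 4) = ((\<Sum>i\<in>UNIV. f i) - \<i> * (\<Sum>i\<in>UNIV. g i)) / 4"
  by (simp add: sum_3 field_simps)

lemma i_axis1: "\<i> *s axis j (1::complex) = axis j \<i>"
  by (auto simp: vec_eq_iff axis_def)
lemma i_axisi: "\<i> *s axis j \<i> = - axis j (1::complex)"
  by (auto simp: vec_eq_iff axis_def)

lemma row_id:
  assumes sm: "smooth_on (UNIV - {0}) F"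
    and hom: "\<forall>z. z \<noteq> 0 \<longrightarrow> (\<forall>c::complex. c \<noteq> 0 \<longrightarrow> F (c *s z) = F z)"
    and z: "z \<noteq> 0"
  shows "(\<Sum>i\<in>UNIV. z$i * cHess F i j z) = 0"
proof -
  let ?e = "axis j (1::complex)" and ?ie = "axis j \<i>"
  have lin: "linear (\<lambda>a. PP F z a u)" for u
    using has_derivative_linear[OF smooth_facts(2)[OF sm z]] .
  have linD: "linear (DF F z)" using has_derivative_linear[OF smooth_facts(1)[OF sm z]] .
  have s1: "PP F z z u = - DF F z u" for u
    using second_first_slot[OF sm hom z, of 1 u] by simp
  have s2: "PP F z (\<i> *s z) u = - DF F z (\<i> *s u)" for u
    using second_first_slot[OF sm hom z, of \<i> u] by simp
  have pt: "z$i * cHess F i j z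
     = (z$i * (of_real (PP F z (axis i 1) ?e) - \<i> * of_real (PP F z (axis i \<i>) ?e))
       + \<i> * (z$i * (of_real (PP F z (axis i 1) ?ie) - \<i> * of_real (PP F z (axis i \<i>) ?ie)))) / 4" for i
    by (simp only: cHess_eq[OF sm z]) (simp add: field_simps)
  have "(\<Sum>i\<in>UNIV. z$i * cHess F i j z)
     = ((\<Sum>i\<in>UNIV. z$i * (of_real (PP F z (axis i 1) ?e) - \<i> * of_real (PP F z (axis i \<i>) ?e)))
       + \<i> * (\<Sum>i\<in>UNIV. z$i * (of_real (PP F z (axis i 1) ?ie) - \<i> * of_real (PP F z (axis i \<i>) ?ie)))) / 4"
    unfolding pt by (rule sumA)
  also have "\<dots> = ((of_real (PP F z z ?e) - \<i> * of_real (PP F z (\<i> *s z) ?e))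
       + \<i> * (of_real (PP F z z ?ie) - \<i> * of_real (PP F z (\<i> *s z) ?ie))) / 4"
    by (simp only: L1[OF lin])
  also have "\<dots> = 0"
    by (simp add: s1 s2 i_axis1 i_axisi linear_neg[OF linD] algebra_simps)
  finally show ?thesis .
qed

lemma lin_rep: "linear (\<lambda>u::C3. \<Sum>b\<in>Basis. (u \<bullet> b) * c b)"
  by (rule linearI) (simp_all add: inner_add_left sum.distrib algebra_simps sum_distrib_left)

lemma col_id:
  assumes sm: "smooth_on (UNIV - {0}) F"
    and hom: "\<forall>z. z \<noteq> 0 \<longrightarrow> (\<forall>c::complex. c \<noteq> 0 \<longrightarrow> F (c *s z) = F z)"
    and z: "z \<noteq> 0"
  shows "(\<Sum>j\<in>UNIV. cnj (z$j) * cHess F i j z) = 0"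
proof -
  let ?e = "axis i (1::complex)" and ?ie = "axis i \<i>"
  have lin: "linear (\<lambda>u. PP F z a u)" for a
  proof -
    have eq: "(\<lambda>u. PP F z a u) = (\<lambda>u. \<Sum>b\<in>Basis. (u \<bullet> b) * PP F z a b)"
      by (rule ext, rule PP_rep[OF sm z])
    from lin_rep[of "PP F z a"] show ?thesis by (simp only: eq[symmetric])
  qed
  have linD: "linear (DF F z)" using has_derivative_linear[OF smooth_facts(1)[OF sm z]] .
  have s1: "PP F z a z = - DF F z a" for a
    using second_second_slot[OF sm hom z, of a 1] by simp
  have s2: "PP F z a (\<i> *s z) = - DF F z (\<i> *s a)" for a
    using second_second_slot[OF sm hom z, of a \<i>] by simp
  have pt: "cnj (z$j) * cHess F i j z
     = (cnj (z$j) * (of_real (PP F z ?e (axis j 1)) + \<i> * of_real (PP F z ?e (axis j \<i>)))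
       - \<i> * (cnj (z$j) * (of_real (PP F z ?ie (axis j 1)) + \<i> * of_real (PP F z ?ie (axis j \<i>))))) / 4" for j
    by (simp only: cHess_eq[OF sm z]) (simp add: field_simps)
  have "(\<Sum>j\<in>UNIV. cnj (z$j) * cHess F i j z)
     = ((\<Sum>j\<in>UNIV. cnj (z$j) * (of_real (PP F z ?e (axis j 1)) + \<i> * of_real (PP F z ?e (axis j \<i>))))
       - \<i> * (\<Sum>j\<in>UNIV. cnj (z$j) * (of_real (PP F z ?ie (axis j 1)) + \<i> * of_real (PP F z ?ie (axis j \<i>))))) / 4"
    unfolding pt by (rule sumB)
  also have "\<dots> = ((of_real (PP F z ?e z) + \<i> * of_real (PP F z ?e (\<i> *s z)))
       - \<i> * (of_real (PP F z ?ie z) + \<i> * of_real (PP F z ?ie (\<i> *s z)))) / 4"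
    by (simp only: L2[OF lin])
  also have "\<dots> = 0"
    by (simp add: s1 s2 i_axis1 i_axisi linear_neg[OF linD] algebra_simps)
  finally show ?thesis .
qed



lemma alg_final:
  fixes H11 H12 H13 H21 H22 H23 H31 H32 H33 z1 z2 z3 c1 c2 c3 :: complex
  assumes "z1*H11 + z2*H21 + z3*H31 = 0" "z1*H12 + z2*H22 + z3*H32 = 0" "z1*H13 + z2*H23 + z3*H33 = 0"
    "c1*H11 + c2*H12 + c3*H13 = 0" "c1*H21 + c2*H22 + c3*H23 = 0" "c1*H31 + c2*H32 + c3*H33 = 0"
    "- H11 - H22 + H33 = 0" "- (z1*c1) - z2*c2 + z3*c3 = 0"
  shows "z1*c1*(H11*H11 + H12*H21 - H13*H31 + H21*H12 + H22*H22 - H23*H32 - H31*H13 - H32*H23 + H33*H33) = 0"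
    and "z2*c2*(H11*H11 + H12*H21 - H13*H31 + H21*H12 + H22*H22 - H23*H32 - H31*H13 - H32*H23 + H33*H33) = 0"
    and "z3*c3*(H11*H11 + H12*H21 - H13*H31 + H21*H12 + H22*H22 - H23*H32 - H31*H13 - H32*H23 + H33*H33) = 0"
  using assms by algebra+

theorem mainTheorem7:
  fixes f F :: "complex ^ 3 \<Rightarrow> real"
  assumes "f \<in> Espace"
    and "harmonic_extension f F"
  shows "\<forall>z\<in>nullcone. hess11_normsq F z = 0"
proof
  fix z assume zN: "z \<in> nullcone"
  then have z: "z \<noteq> 0" and L0: "Lform z = 0" by (auto simp: nullcone_def)
  have sm: "smooth_on (UNIV - {0}) F"
    and hom: "\<forall>z. z \<noteq> 0 \<longrightarrow> (\<forall>c::complex. c \<noteq> 0 \<longrightarrow> F (c *s z) = F z)"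
    using assms(2) unfolding harmonic_extension_def by auto
  obtain h where hD: "\<forall>z. z \<noteq> 0 \<longrightarrow> Delta F z = of_real (Lform z * h z)"
    using assms(2) unfolding harmonic_extension_def by auto
  have D0: "Delta F z = 0" using hD z L0 by simp
  define H where "H = (\<lambda>i j. cHess F i j z)"
  have row: "(\<Sum>i\<in>UNIV. z$i * H i j) = 0" for j
    unfolding H_def by (rule row_id[OF sm hom z])
  have col: "(\<Sum>j\<in>UNIV. cnj (z$j) * H i j) = 0" for i
    unfolding H_def by (rule col_id[OF sm hom z])
  note r1 = row[of 1] and r2 = row[of 2] and r3 = row[of 3]
  note k1 = col[of 1] and k2 = col[of 2] and k3 = col[of 3]
  have tr: "- H 1 1 - H 2 2 + H 3 3 = 0"
    using D0 unfolding Delta_def H_def cHess_def by (simp add: sum_3 sgnL_def)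
  have nz: "z$i * cnj (z$i) = of_real ((cmod (z$i))^2)" for i
    using complex_norm_square by simp
  have three0: "(3::3) = 0" by simp
  have nul: "- (z$1 * cnj (z$1)) - z$2 * cnj (z$2) + z$3 * cnj (z$3) = 0"
  proof -
    have "- (z$1 * cnj (z$1)) - z$2 * cnj (z$2) + z$3 * cnj (z$3) = of_real (Lform z)"
      unfolding nz Lform_def three0 by simp
    then show ?thesis using L0 by simp
  qed
  have hs: "hess11_normsq F z = H 1 1*H 1 1 + H 1 2*H 2 1 - H 1 3*H 3 1 + H 2 1*H 1 2 + H 2 2*H 2 2
       - H 2 3*H 3 2 - H 3 1*H 1 3 - H 3 2*H 2 3 + H 3 3*H 3 3"
    unfolding hess11_normsq_def H_def by (simp add: sum_3 ginv_def sgnL_def algebra_simps)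
  note A = alg_final[OF r1[simplified sum_3] r2[simplified sum_3] r3[simplified sum_3]
      k1[simplified sum_3] k2[simplified sum_3] k3[simplified sum_3] tr nul]
  obtain k where "z$k \<noteq> 0" using z by (metis vec_eq_iff zero_index)
  then have nzk: "z$k * cnj (z$k) \<noteq> 0" by simp
  have "k = 1 \<or> k = 2 \<or> k = 3" using exhaust_3 by auto
  then show "hess11_normsq F z = 0" unfolding hs using A nzk by auto
qed

end
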